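(* Let $R_X\subseteq U_X$ be given and let $\nu,\gamma,G_X,B_X,\sigma^2$ be defined from $(f,\mathcal{T},R_X)$ as in the context. Define $B_\eta:=\min\{\sigma^2,\,1-\nu^2\}$. Let $\eta\in(0,B_\eta)$, put $\tau:=\sqrt{1-\eta}$, and let $$R'_X:=\{x\in U_X:\ \Pr_{h\sim\mathcal{T}}[h(x)=f(x)]<\tau\}.$$ Then: (i) $|R'_X\cap(U_X\setminus W_X)|\le \frac{\nu}{1-\tau}\,|U_X\setminus W_X|$; (ii) $\left(1-\frac{\gamma}{\tau}\right)|R_X|\le |R_X\cap R'_X|$; (iii) $G_X\subseteq R'_X$; (iv) $|R'_X\cap B_X|\ge \frac{\sigma^2-\eta}{1-\eta}\,|B_X|$.
   Context: Setting. $\mathcal{X}$ is an input set and $\mathcal{Y}$ a finite set of labels. $U$ is a finite nonempty set of labeled test points $(x,y_x)$ with $x\in\mathcal{X}$, $y_x\in\mathcal{Y}$ and distinct inputs; $U_X$ is its set of inputs. All probabilities and expectations over $x$ (or $(x,y_x)$) are with respect to the uniform distribution on $U$ (or on the indicated subset when conditioning). $f:\mathcal{X}\to\mathcal{Y}$ is a fixed classifier. $\mathcal{T}$ is a probability distribution on a set of classifiers $h:\mathcal{X}\to\mathcal{Y}$ (an ensemble); $h\sim\mathcal{T}$ is drawn independently of $x$. $W_X:=\{x\in U_X: f(x)\neq y_x\}$ is the set of misclassified points, $e_f:=|W_X|/|U_X|$ and $\mathrm{acc}(f):=1-e_f$. For $x\in U_X$ the diversity is $\sigma_x^2:=1-\sum_{y\in\mathcal{Y}}\big(\Pr_{h\sim\mathcal{T}}[h(x)=y]\big)^2=1-\Pr_{h_1,h_2\sim\mathcal{T}\text{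 i.i.d.}}[h_1(x)=h_2(x)]$. Quantities relative to a set $R_X\subseteq U_X$: $\nu:=\Pr_{(x,y_x)\sim U,\,h\sim\mathcal{T}}[h(x)\neq y_x\mid f(x)=y_x]$ (set $\nu:=0$ if $U_X\setminus W_X=\emptyset$); $\gamma:=\Pr_{x\sim R_X,\,h\sim\mathcal{T}}[h(x)=f(x)]$ with $x$ uniform on $R_X$ (set $\gamma:=0$ if $R_X=\emptyset$); $G_X:=\{x\in W_X\setminus R_X:\ \Pr_{h\sim\mathcal{T}}[h(x)=y_x]\ge 1-\nu\}$; $B_X:=W_X\setminus(R_X\cup G_X)$; $\sigma^2:=\mathbb{E}[\sigma_x^2\mid x\in B_X]$, the average of $\sigma_x^2$ over $B_X$ (set $\sigma^2:=1$ if $B_X=\emptyset$). *)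

theory Defs
  imports "HOL-Probability.Probability"
begin

text \<open>The test set U is represented by its finite input set UX together with the
  labelling function yl (inputs are distinct, so U = {(x, yl x) | x \<in> UX}).\<close>

definition pT :: "('x \<Rightarrow> 'y) pmf \<Rightarrow> 'x \<Rightarrow> 'y \<Rightarrow> real" where
  "pT T x y = measure_pmf.prob T {h. h x = y}"

definition wrongX :: "'x set \<Rightarrow> ('x \<Rightarrow> 'y) \<Rightarrow> ('x \<Rightarrow> 'y) \<Rightarrow> 'x set" where
  "wrongX UX yl f = {x \<in> UX. f x \<noteq> yl x}"

definition divX :: "('x \<Rightarrow> 'y::finite) pmf \<Rightarrow> 'x \<Rightarrow> real" where
  "divX T x = 1 - (\<Sum>y\<in>UNIV. (pT T x y)^2)"

definition nuX :: "'x set \<Rightarrow> ('x \<Rightarrow> 'y) \<Rightarrow> ('x \<Rightarrow> 'y) \<Rightarrow> ('x \<Rightarrow> 'y) pmf \<Rightarrow> real" where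
  "nuX UX yl f T = (let C = UX - wrongX UX yl f in
     if C = {} then 0 else (\<Sum>x\<in>C. 1 - pT T x (yl x)) / real (card C))"

definition gammaX :: "'x set \<Rightarrow> ('x \<Rightarrow> 'y) \<Rightarrow> ('x \<Rightarrow> 'y) pmf \<Rightarrow> real" where
  "gammaX RX f T = (if RX = {} then 0 else (\<Sum>x\<in>RX. pT T x (f x)) / real (card RX))"

definition goodX :: "'x set \<Rightarrow> ('x \<Rightarrow> 'y) \<Rightarrow> ('x \<Rightarrow> 'y) \<Rightarrow> ('x \<Rightarrow> 'y) pmf \<Rightarrow> 'x set \<Rightarrow> 'x set" where
  "goodX UX yl f T RX = {x \<in> wrongX UX yl f - RX. pT T x (yl x) \<ge> 1 - nuX UX yl f T}"

definition badX :: "'x set \<Rightarrow> ('x \<Rightarrow> 'y) \<Rightarrow> ('x \<Rightarrow> 'y) \<Rightarrow> ('x \<Rightarrow> 'y) pmf \<Rightarrow> 'x set \<Rightarrow> 'x set" where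
  "badX UX yl f T RX = wrongX UX yl f - (RX \<union> goodX UX yl f T RX)"

definition sigma2X :: "'x set \<Rightarrow> ('x \<Rightarrow> 'y::finite) \<Rightarrow> ('x \<Rightarrow> 'y) \<Rightarrow> ('x \<Rightarrow> 'y) pmf \<Rightarrow> 'x set \<Rightarrow> real" where
  "sigma2X UX yl f T RX = (let B = badX UX yl f T RX in
     if B = {} then 1 else (\<Sum>x\<in>B. divX T x) / real (card B))"

definition BetaX :: "'x set \<Rightarrow> ('x \<Rightarrow> 'y::finite) \<Rightarrow> ('x \<Rightarrow> 'y) \<Rightarrow> ('x \<Rightarrow> 'y) pmf \<Rightarrow> 'x set \<Rightarrow> real" where
  "BetaX UX yl f T RX = min (sigma2X UX yl f T RX) (1 - (nuX UX yl f T)^2)"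

definition newRX :: "'x set \<Rightarrow> ('x \<Rightarrow> 'y) \<Rightarrow> ('x \<Rightarrow> 'y) pmf \<Rightarrow> real \<Rightarrow> 'x set" where
  "newRX UX f T tau = {x \<in> UX. pT T x (f x) < tau}"

end

theory Submission
  imports Defs
begin

lemma pT_nonneg: "0 \<le> pT T x y" by (simp add: pT_def)
lemma pT_le1: "pT T x y \<le> 1" by (simp add: pT_def)

lemma pT_two: assumes "a \<noteq> b" shows "pT T x a + pT T x b \<le> 1"
proof -
  have "pT T x a + pT T x b = measure_pmf.prob T ({h. h x = a} \<union> {h. h x = b})"
    unfolding pT_def using assms
    by (subst measure_pmf.finite_measure_Union) auto
  also have "\<dots> \<le> 1" by simp
  finally show ?thesis .
qed

lemma div_le: "divX T x \<le> 1 - (pT T x y)^2"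
proof -
  have "(pT T x y)^2 \<le> (\<Sum>z\<in>UNIV. (pT T x z)^2)"
    by (rule member_le_sum) auto
  thus ?thesis unfolding divX_def by simp
qed

lemma div_le1: "divX T x \<le> 1"
  unfolding divX_def by (simp add: sum_nonneg)

theorem mainTheorem1:
  fixes UX :: "'x set" and yl f :: "'x \<Rightarrow> 'y::finite" and T :: "('x \<Rightarrow> 'y) pmf"
    and RX :: "'x set" and eta :: real
  assumes "finite UX" and "UX \<noteq> {}" and "RX \<subseteq> UX"
    and "0 < eta" and "eta < BetaX UX yl f T RX"
  shows
    "let W = wrongX UX yl f; nu = nuX UX yl f T; gam = gammaX RX f T;
         G = goodX UX yl f T RX; B = badX UX yl f T RX; s2 = sigma2X UX yl f T RX;
         tau = sqrt (1 - eta); R' = newRX UX f T tau in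
       real (card (R' \<inter> (UX - W))) \<le> nu / (1 - tau) * real (card (UX - W))
     \<and> (1 - gam / tau) * real (card RX) \<le> real (card (RX \<inter> R'))
     \<and> G \<subseteq> R'
     \<and> real (card (R' \<inter> B)) \<ge> (s2 - eta) / (1 - eta) * real (card B)"
proof -
  define W where "W = wrongX UX yl f"
  define nu where "nu = nuX UX yl f T"
  define gam where "gam = gammaX RX f T"
  define G where "G = goodX UX yl f T RX"
  define B where "B = badX UX yl f T RX"
  define s2 where "s2 = sigma2X UX yl f T RX"
  define tau where "tau = sqrt (1 - eta)"
  define R' where "R' = newRX UX f T tau"
  have fin: "finite UX" by fact
  have eta1: "eta < 1 - nu^2" using assms(5) unfolding BetaX_def nu_def by simp
  have nu2: "0 \<le> nu^2" by simp
  have eta1': "eta < 1" using eta1 nu2 by linarith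
  have tau_pos: "0 < tau" unfolding tau_def using eta1' by simp
  have tau_lt1: "tau < 1" unfolding tau_def using assms(4) eta1' by simp
  have tau2: "tau^2 = 1 - eta" unfolding tau_def using eta1' by simp
  have nu_tau: "nu < tau"
  proof -
    have "nu^2 < tau^2" using tau2 eta1 by simp
    hence "\<bar>nu\<bar> < \<bar>tau\<bar>" using abs_le_square_iff[of tau nu] by (metis not_le)
    thus ?thesis using tau_pos by simp
  qed
  have R'_def2: "R' = {x \<in> UX. pT T x (f x) < tau}" unfolding R'_def newRX_def by simp
  have p1: "real (card (R' \<inter> (UX - W))) \<le> nu / (1 - tau) * real (card (UX - W))"
  proof (cases "UX - W = {}")
    case True thus ?thesis by (simp only: True) simp
  next
    case False
    define C where "C = UX - W"
    have finC: "finite C" using fin unfolding C_def by simp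
    have Ceq: "\<And>x. x \<in> C \<Longrightarrow> f x = yl x" unfolding C_def W_def wrongX_def by auto
    have nuC: "nu * real (card C) = (\<Sum>x\<in>C. 1 - pT T x (yl x))"
      using False finC unfolding nu_def nuX_def C_def W_def Let_def
      by (simp add: card_gt_0_iff)
    have "real (card (R' \<inter> C)) * (1 - tau) = (\<Sum>x\<in>R' \<inter> C. 1 - tau)" by simp
    also have "\<dots> \<le> (\<Sum>x\<in>R' \<inter> C. 1 - pT T x (yl x))"
      by (rule sum_mono) (use Ceq R'_def2 in auto)
    also have "\<dots> \<le> (\<Sum>x\<in>C. 1 - pT T x (yl x))"
      by (rule sum_mono2) (use finC pT_le1 in auto)
    finally have "real (card (R' \<inter> C)) * (1 - tau) \<le> nu * real (card C)" using nuC by simp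
    thus ?thesis using tau_lt1 unfolding C_def by (simp add: pos_le_divide_eq field_simps)
  qed
  have p2: "(1 - gam / tau) * real (card RX) \<le> real (card (RX \<inter> R'))"
  proof (cases "RX = {}")
    case True thus ?thesis by simp
  next
    case False
    have finR: "finite RX" using assms(3) fin finite_subset by blast
    have g: "gam * real (card RX) = (\<Sum>x\<in>RX. pT T x (f x))"
      using False finR unfolding gam_def gammaX_def by (simp add: card_gt_0_iff)
    have "tau * real (card (RX - R')) = (\<Sum>x\<in>RX - R'. tau)" by simp
    also have "\<dots> \<le> (\<Sum>x\<in>RX - R'. pT T x (f x))"
      by (rule sum_mono) (use R'_def2 assms(3) in auto)
    also have "\<dots> \<le> (\<Sum>x\<in>RX. pT T x (f x))"
      by (rule sum_mono2) (use finR pT_nonneg in auto)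
    finally have a: "tau * real (card (RX - R')) \<le> gam * real (card RX)" using g by simp
    have c: "real (card (RX - R')) = real (card RX) - real (card (RX \<inter> R'))"
      using finR card_Diff_subset_Int[of RX R'] card_mono[of RX "RX \<inter> R'"]
      by (metis Diff_Diff_Int Int_lower1 card_Diff_subset finite_Int of_nat_diff)
    have "real (card RX) - real (card (RX \<inter> R')) \<le> gam / tau * real (card RX)"
      using a c tau_pos by (simp add: field_simps)
    thus ?thesis by (simp add: algebra_simps)
  qed
  have p3: "G \<subseteq> R'"
  proof
    fix x assume x: "x \<in> G"
    hence xU: "x \<in> UX" and ne: "f x \<noteq> yl x" and ge: "pT T x (yl x) \<ge> 1 - nu"
      unfolding G_def goodX_def wrongX_def nu_def by auto
    have "pT T x (f x) + pT T x (yl x) \<le> 1" using pT_two[OF ne] .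
    hence "pT T x (f x) < tau" using ge nu_tau by linarith
    thus "x \<in> R'" using xU R'_def2 by simp
  qed
  have p4: "real (card (R' \<inter> B)) \<ge> (s2 - eta) / (1 - eta) * real (card B)"
  proof (cases "B = {}")
    case True thus ?thesis by simp
  next
    case False
    have finB: "finite B" using fin unfolding B_def badX_def wrongX_def by simp
    have s: "s2 * real (card B) = (\<Sum>x\<in>B. divX T x)"
      using False finB unfolding s2_def sigma2X_def B_def Let_def by (simp add: card_gt_0_iff)
    have BU: "B \<subseteq> UX" unfolding B_def badX_def wrongX_def by auto
    have "(\<Sum>x\<in>B. divX T x) = (\<Sum>x\<in>B \<inter> R'. divX T x) + (\<Sum>x\<in>B - R'. divX T x)"
      using finB by (metis sum.Int_Diff)
    also have "(\<Sum>x\<in>B \<inter> R'. divX T x) \<le> (\<Sum>x\<in>B \<inter> R'. 1)"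
      by (rule sum_mono) (rule div_le1)
    also have "(\<Sum>x\<in>B - R'. divX T x) \<le> (\<Sum>x\<in>B - R'. eta)"
    proof (rule sum_mono)
      fix x assume "x \<in> B - R'"
      hence "pT T x (f x) \<ge> tau" using BU R'_def2 by auto
      hence "tau^2 \<le> (pT T x (f x))^2" using tau_pos by (simp add: power_mono)
      thus "divX T x \<le> eta" using div_le[of T x "f x"] tau2 by linarith
    qed
    finally have "sum (divX T) B \<le> real (card (B \<inter> R')) + real (card (B - R')) * eta" by simp
    hence "s2 * real (card B) \<le> real (card (B \<inter> R')) + eta * real (card (B - R'))"
      using s by (metis mult.commute)
    moreover have "real (card (B - R')) = real (card B) - real (card (B \<inter> R'))"
    proof -
      have "card (B - R') = card B - card (B \<inter> R')" using finB by (simp add: card_Diff_subset_Int)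
      moreover have "card (B \<inter> R') \<le> card B" using finB by (simp add: card_mono)
      ultimately show ?thesis by (simp add: of_nat_diff)
    qed
    ultimately have "(s2 - eta) * real (card B) \<le> (1 - eta) * real (card (B \<inter> R'))"
      by (simp add: right_diff_distrib left_diff_distrib)
    hence "(s2 - eta) / (1 - eta) * real (card B) \<le> real (card (B \<inter> R'))"
      using eta1' by (simp add: field_simps)
    thus ?thesis by (simp add: Int_commute)
  qed
  show ?thesis using p1 p2 p3 p4
    unfolding Let_def W_def nu_def gam_def G_def B_def s2_def tau_def R'_def by simp
qed

end
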